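(* Let $f\colon (A,I)\to(B,J)$ be an excision datum. Then every ring map from $A$ to a valuation ring of rank $\le 1$ factors through $A\to A/I\times B$ (i.e. factors through $A\to A/I$ or through $f\colon A\to B$). In particular $\mathrm{Spec}(A/I\times B)\to\mathrm{Spec}(A)$ is an $\mathrm{arc}$-cover.
   Context: An excision datum is a ring map $f\colon A\to B$ with ideals $I\subset A$, $J\subset B$ such that $f$ carries $I$ isomorphically onto $J$. A map $Y\to X$ of qcqs schemes is an $\mathrm{arc}$-cover if for every valuation ring $V$ of rank $\le1$ and map $\mathrm{Spec}(V)\to X$ there is a faithfully flat map $V\to W$ to a rank $\le 1$ valuation ring and a map $\mathrm{Spec}(W)\to Y$ such that $\mathrm{Spec}(W)\to Y\to X$ equals $\mathrm{Spec}(W)\to\mathrm{Spec}(V)\to X$. *)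

theory Defs
  imports "HOL-Algebra.Algebra"
begin

definition excision_datum :: "'a ring \<Rightarrow> 'b ring \<Rightarrow> ('a \<Rightarrow> 'b) \<Rightarrow> 'a set \<Rightarrow> 'b set \<Rightarrow> bool" where
  "excision_datum A B f I J \<longleftrightarrow>
     cring A \<and> cring B \<and> f \<in> ring_hom A B \<and> ideal I A \<and> ideal J B \<and> bij_betw f I J"

definition valuation_ring :: "'v ring \<Rightarrow> bool" where
  "valuation_ring V \<longleftrightarrow> domain V \<and>
     (\<forall>x\<in>carrier V. \<forall>y\<in>carrier V.
        (\<exists>c\<in>carrier V. y = x \<otimes>\<^bsub>V\<^esub> c) \<or> (\<exists>c\<in>carrier V. x = y \<otimes>\<^bsub>V\<^esub> c))"

definition rank_le_one :: "'v ring \<Rightarrow> bool" where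
  "rank_le_one V \<longleftrightarrow>
     (\<forall>P. primeideal P V \<and> P \<noteq> {\<zero>\<^bsub>V\<^esub>} \<longrightarrow> maximalideal P V)"

definition valuation_ring_rank_le_one :: "'v ring \<Rightarrow> bool" where
  "valuation_ring_rank_le_one V \<longleftrightarrow> valuation_ring V \<and> rank_le_one V"

text \<open>Flatness of W as a V-module via \<phi> (equational criterion of flatness).\<close>
definition flat_hom :: "'v ring \<Rightarrow> 'w ring \<Rightarrow> ('v \<Rightarrow> 'w) \<Rightarrow> bool" where
  "flat_hom V W \<phi> \<longleftrightarrow>
     (\<forall>n::nat. \<forall>a m.
        (\<forall>i<n. a i \<in> carrier V \<and> m i \<in> carrier W) \<and>
        finsum W (\<lambda>i. \<phi> (a i) \<otimes>\<^bsub>W\<^esub> m i) {..<n} = \<zero>\<^bsub>W\<^esub> \<longrightarrow>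
        (\<exists>k::nat. \<exists>b y.
           (\<forall>i<n. \<forall>j<k. b i j \<in> carrier V) \<and> (\<forall>j<k. y j \<in> carrier W) \<and>
           (\<forall>i<n. m i = finsum W (\<lambda>j. \<phi> (b i j) \<otimes>\<^bsub>W\<^esub> y j) {..<k}) \<and>
           (\<forall>j<k. finsum V (\<lambda>i. a i \<otimes>\<^bsub>V\<^esub> b i j) {..<n} = \<zero>\<^bsub>V\<^esub>)))"

definition faithfully_flat_hom :: "'v ring \<Rightarrow> 'w ring \<Rightarrow> ('v \<Rightarrow> 'w) \<Rightarrow> bool" where
  "faithfully_flat_hom V W \<phi> \<longleftrightarrow>
     \<phi> \<in> ring_hom V W \<and> flat_hom V W \<phi> \<and>
     (\<forall>M. maximalideal M V \<longrightarrow> genideal W (\<phi> ` M) \<noteq> carrier W)"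

end

theory Submission
  imports Defs
begin

lemma val_rank_aux:
  fixes V (structure)
  assumes VV: "valuation_ring_rank_le_one V"
    and c: "c \<in> carrier V" "c \<noteq> \<zero>" "\<not>(\<exists>e\<in>carrier V. c \<otimes> e = \<one>)"
    and z: "z \<in> carrier V" "\<forall>n::nat. \<exists>d\<in>carrier V. z = c[^]n \<otimes> d"
  shows "z = \<zero>"
proof (rule ccontr)
  assume zne: "z \<noteq> \<zero>"
  have dom: "domain V" and val: "\<And>x y. x \<in> carrier V \<Longrightarrow> y \<in> carrier V \<Longrightarrow>
        (\<exists>c\<in>carrier V. y = x \<otimes> c) \<or> (\<exists>c\<in>carrier V. x = y \<otimes> c)"
    and rk: "\<And>P. primeideal P V \<Longrightarrow> P \<noteq> {\<zero>} \<Longrightarrow> maximalideal P V"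
    using VV unfolding valuation_ring_rank_le_one_def valuation_ring_def rank_le_one_def by auto
  interpret domain V by (rule dom)
  define P where "P = {v\<in>carrier V. \<forall>n::nat. \<exists>d\<in>carrier V. v = c[^]n \<otimes> d}"
  have cn: "\<And>n::nat. c[^]n \<in> carrier V" using c by simp
  have cnz: "\<And>n::nat. c[^]n \<noteq> \<zero>" using c
  proof -
    fix n :: nat show "c[^]n \<noteq> \<zero>" using c by (induct n) (simp_all add: integral_iff)
  qed
  have P0: "\<zero> \<in> P" unfolding P_def using cn by (auto intro!: bexI[of _ \<zero>])
  have Pc: "P \<subseteq> carrier V" unfolding P_def by auto
  have Pneg: "\<ominus> a \<in> P" if a: "a \<in> P" for a
  proof -
      have "a \<in> carrier V" using a unfolding P_def by auto
      moreover have "\<forall>n::nat. \<exists>d\<in>carrier V. \<ominus> a = c[^]n \<otimes> d"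
      proof
        fix n :: nat
        obtain d where d: "d \<in> carrier V" "a = c[^]n \<otimes> d" using a unfolding P_def by auto
        then have "\<ominus> a = c[^]n \<otimes> (\<ominus> d)" using cn by (simp add: r_minus)
        then show "\<exists>d\<in>carrier V. \<ominus> a = c[^]n \<otimes> d" using d by auto
      qed
      ultimately show ?thesis unfolding P_def by simp
  qed
  have Padd: "a \<oplus> b \<in> P" if a: "a \<in> P" and b: "b \<in> P" for a b
    proof -
      have "\<forall>n::nat. \<exists>d\<in>carrier V. a \<oplus> b = c[^]n \<otimes> d"
      proof
        fix n :: nat
        obtain d where d: "d \<in> carrier V" "a = c[^]n \<otimes> d" using a unfolding P_def by auto
        obtain d' where d': "d' \<in> carrier V" "b = c[^]n \<otimes> d'" using b unfolding P_def by auto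
        have "a \<oplus> b = c[^]n \<otimes> (d \<oplus> d')" using d d' cn by (simp add: r_distr)
        then show "\<exists>d\<in>carrier V. a \<oplus> b = c[^]n \<otimes> d" using d d' by auto
      qed
      then show ?thesis using a b unfolding P_def by auto
    qed
  have sub: "subgroup P (add_monoid V)"
    using Pneg[unfolded a_inv_def] by (intro subgroup.intro) (auto simp: P0 Pc[THEN subsetD] Padd)
  have lc: "\<And>a x. a \<in> P \<Longrightarrow> x \<in> carrier V \<Longrightarrow> x \<otimes> a \<in> P"
  proof -
    fix a x assume a: "a \<in> P" and x: "x \<in> carrier V"
    have "\<forall>n::nat. \<exists>d\<in>carrier V. x \<otimes> a = c[^]n \<otimes> d"
    proof
      fix n :: nat
      obtain d where d: "d \<in> carrier V" "a = c[^]n \<otimes> d" using a unfolding P_def by auto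
      have "x \<otimes> a = c[^]n \<otimes> (x \<otimes> d)" using d x cn by (simp add: m_lcomm)
      then show "\<exists>d\<in>carrier V. x \<otimes> a = c[^]n \<otimes> d" using d x by auto
    qed
    then show "x \<otimes> a \<in> P" using a x unfolding P_def by auto
  qed
  have idl: "ideal P V"
  proof (rule idealI[OF ring_axioms sub])
    fix a x assume "a \<in> P" "x \<in> carrier V"
    then show "x \<otimes> a \<in> P" by (rule lc)
    then show "a \<otimes> x \<in> P" using \<open>a \<in> P\<close> \<open>x \<in> carrier V\<close> Pc m_comm by auto
  qed
  have nu: "\<And>d. d \<in> carrier V \<Longrightarrow> c \<otimes> d \<noteq> \<one>" using c by auto
  have one_notin: "\<one> \<notin> P"
  proof
    assume "\<one> \<in> P"
    then obtain d where "d \<in> carrier V" "\<one> = c[^](1::nat) \<otimes> d" unfolding P_def by blast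
    then show False using nu c by (metis nat_pow_eone)
  qed
  have notc: "carrier V \<noteq> P" using one_notin by auto
  have prime: "primeideal P V"
  proof (rule primeidealI[OF idl is_cring notc])
    fix a b assume a: "a \<in> carrier V" and b: "b \<in> carrier V" and ab: "a \<otimes> b \<in> P"
    show "a \<in> P \<or> b \<in> P"
    proof (rule ccontr)
      assume "\<not> (a \<in> P \<or> b \<in> P)"
      then obtain m k :: nat where m: "\<forall>d\<in>carrier V. a \<noteq> c[^]m \<otimes> d"
        and k: "\<forall>d\<in>carrier V. b \<noteq> c[^]k \<otimes> d" using a b unfolding P_def by blast
      obtain e where e: "e \<in> carrier V" "c[^]m = a \<otimes> e" using val[OF cn[of m] a] m by blast
      obtain e' where e': "e' \<in> carrier V" "c[^]k = b \<otimes> e'" using val[OF cn[of k] b] k by blast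
      obtain d where d: "d \<in> carrier V" "a \<otimes> b = c[^](Suc (m+k)) \<otimes> d" using ab unfolding P_def by blast
      have "c[^](m+k) \<otimes> \<one> = c[^]m \<otimes> c[^]k" using c by (simp add: nat_pow_mult)
      also have "\<dots> = (a \<otimes> b) \<otimes> (e \<otimes> e')" using e e' a b by (simp add: m_ac)
      also have "\<dots> = (c[^](m+k) \<otimes> c \<otimes> d) \<otimes> (e \<otimes> e')" using d by simp
      also have "\<dots> = c[^](m+k) \<otimes> (c \<otimes> (d \<otimes> e \<otimes> e'))" using d e e' c cn by (simp add: m_ac)
      finally have eq: "c[^](m+k) \<otimes> \<one> = c[^](m+k) \<otimes> (c \<otimes> (d \<otimes> e \<otimes> e'))" .
      have "\<one> = c \<otimes> (d \<otimes> e \<otimes> e')"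
        using m_lcancel[OF cnz[of "m+k"] cn[of "m+k"], of \<one> "c \<otimes> (d \<otimes> e \<otimes> e')"] eq c d e e' by simp
      then show False using nu c d e e' by (metis m_closed)
    qed
  qed
  have zP: "z \<in> P" using z unfolding P_def by auto
  have "P \<noteq> {\<zero>}" using zP zne by auto
  then have maxP: "maximalideal P V" using rk prime by blast
  have PI: "ideal (PIdl c) V" using cgenideal_ideal c by blast
  have PsubI: "P \<subseteq> PIdl c"
  proof
    fix v assume "v \<in> P"
    then obtain d where "d \<in> carrier V" "v = c[^](1::nat) \<otimes> d" unfolding P_def by blast
    then show "v \<in> PIdl c" unfolding cgenideal_def using c by (auto intro!: exI[of _ d] m_comm)
  qed
  have Isub: "PIdl c \<subseteq> carrier V" unfolding cgenideal_def using c by auto 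
  have "PIdl c \<noteq> carrier V"
  proof
    assume "PIdl c = carrier V"
    then have "\<one> \<in> PIdl c" by simp
    then obtain x where "x \<in> carrier V" "\<one> = x \<otimes> c" unfolding cgenideal_def by blast
    then show False using nu c by (metis m_comm)
  qed
  then have "PIdl c = P" using maximalideal.I_maximal[OF maxP PI PsubI Isub] by blast
  then have "c \<in> P" using cgenideal_self c by blast
  then obtain d where d: "d \<in> carrier V" "c = c[^](2::nat) \<otimes> d" unfolding P_def by blast
  then have "c \<otimes> \<one> = c \<otimes> (c \<otimes> d)" using c by (simp add: numeral_2_eq_2 m_assoc)
  then have "\<one> = c \<otimes> d" using m_lcancel[of c \<one> "c \<otimes> d"] c d by simp
  then show False using nu d by metis
qed

lemma extend_lemma:
  fixes A :: "'a ring" and B :: "'b ring" and V :: "'v ring"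
  assumes cA: "cring A" and cB: "cring B" and fh: "f \<in> ring_hom A B"
    and iI: "ideal I A" and iJ: "ideal J B" and bij: "bij_betw f I J"
    and VV: "valuation_ring_rank_le_one V" and gh: "g \<in> ring_hom A V"
    and x0: "x0 \<in> I" and gx0: "g x0 \<noteq> \<zero>\<^bsub>V\<^esub>"
  shows "\<exists>h \<in> ring_hom B V. \<forall>a\<in>carrier A. h (f a) = g a"
proof -
  have dom: "domain V" and val: "\<And>x y. x \<in> carrier V \<Longrightarrow> y \<in> carrier V \<Longrightarrow>
        (\<exists>c\<in>carrier V. y = x \<otimes>\<^bsub>V\<^esub> c) \<or> (\<exists>c\<in>carrier V. x = y \<otimes>\<^bsub>V\<^esub> c)"
    using VV unfolding valuation_ring_rank_le_one_def valuation_ring_def by auto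
  interpret A: cring A by (rule cA)
  interpret B: cring B by (rule cB)
  interpret V: domain V by (rule dom)
  interpret I: ideal I A by (rule iI)
  interpret J: ideal J B by (rule iJ)
  have Ic: "\<And>x. x \<in> I \<Longrightarrow> x \<in> carrier A" by (rule I.Icarr)
  have x0c: "x0 \<in> carrier A" using x0 Ic by blast
  have fc: "\<And>a. a \<in> carrier A \<Longrightarrow> f a \<in> carrier B" using fh by (rule ring_hom_closed)
  have gc: "\<And>a. a \<in> carrier A \<Longrightarrow> g a \<in> carrier V" using gh by (rule ring_hom_closed)
  have fm: "\<And>a b. a \<in> carrier A \<Longrightarrow> b \<in> carrier A \<Longrightarrow> f (a \<otimes>\<^bsub>A\<^esub> b) = f a \<otimes>\<^bsub>B\<^esub> f b"
    using fh by (rule ring_hom_mult)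
  have fa: "\<And>a b. a \<in> carrier A \<Longrightarrow> b \<in> carrier A \<Longrightarrow> f (a \<oplus>\<^bsub>A\<^esub> b) = f a \<oplus>\<^bsub>B\<^esub> f b"
    using fh by (rule ring_hom_add)
  have gm: "\<And>a b. a \<in> carrier A \<Longrightarrow> b \<in> carrier A \<Longrightarrow> g (a \<otimes>\<^bsub>A\<^esub> b) = g a \<otimes>\<^bsub>V\<^esub> g b"
    using gh by (rule ring_hom_mult)
  have ga: "\<And>a b. a \<in> carrier A \<Longrightarrow> b \<in> carrier A \<Longrightarrow> g (a \<oplus>\<^bsub>A\<^esub> b) = g a \<oplus>\<^bsub>V\<^esub> g b"
    using gh by (rule ring_hom_add)
  have fI: "f ` I = J" and finj: "inj_on f I" using bij unfolding bij_betw_def by auto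
  have fx0J: "f x0 \<in> J" using fI x0 by blast
  define Y where "Y b = (THE y. y \<in> I \<and> f y = f x0 \<otimes>\<^bsub>B\<^esub> b)" for b
  have Yprop: "Y b \<in> I \<and> f (Y b) = f x0 \<otimes>\<^bsub>B\<^esub> b" if b: "b \<in> carrier B" for b
  proof -
    have "f x0 \<otimes>\<^bsub>B\<^esub> b \<in> J" by (rule J.I_r_closed[OF fx0J b])
    then have "f x0 \<otimes>\<^bsub>B\<^esub> b \<in> f ` I" by (simp only: fI)
    then obtain y where y: "y \<in> I" "f y = f x0 \<otimes>\<^bsub>B\<^esub> b" by (metis imageE)
    have "\<exists>!y. y \<in> I \<and> f y = f x0 \<otimes>\<^bsub>B\<^esub> b"
    proof (rule ex1I[of _ y])
      show "y \<in> I \<and> f y = f x0 \<otimes>\<^bsub>B\<^esub> b" using y by simp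
      fix y' assume "y' \<in> I \<and> f y' = f x0 \<otimes>\<^bsub>B\<^esub> b"
      then show "y' = y" using y inj_onD[OF finj, of y' y] by simp
    qed
    then show ?thesis unfolding Y_def by (rule theI')
  qed
  have Yuniq: "Y b = y" if "b \<in> carrier B" "y \<in> I" "f y = f x0 \<otimes>\<^bsub>B\<^esub> b" for b y
  proof -
    have "Y b \<in> I" "f (Y b) = f y" using Yprop[OF that(1)] that(3) by auto
    then show ?thesis using that(2) inj_onD[OF finj, of "Y b" y] by simp
  qed
  have YI: "\<And>b. b \<in> carrier B \<Longrightarrow> Y b \<in> I" using Yprop by blast
  have Yc: "\<And>b. b \<in> carrier B \<Longrightarrow> Y b \<in> carrier A" using YI Ic by blast
  have Ymul: "x0 \<otimes>\<^bsub>A\<^esub> Y (b \<otimes>\<^bsub>B\<^esub> b') = Y b \<otimes>\<^bsub>A\<^esub> Y b'" if b: "b \<in> carrier B" "b' \<in> carrier B" for b b'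
  proof -
    have bb: "b \<otimes>\<^bsub>B\<^esub> b' \<in> carrier B" using b by simp
    have l: "x0 \<otimes>\<^bsub>A\<^esub> Y (b \<otimes>\<^bsub>B\<^esub> b') \<in> I" using I.I_r_closed x0 Yc[OF bb] by blast
    have r: "Y b \<otimes>\<^bsub>A\<^esub> Y b' \<in> I" using I.I_r_closed YI[OF b(1)] Yc[OF b(2)] by blast
    have "f (x0 \<otimes>\<^bsub>A\<^esub> Y (b \<otimes>\<^bsub>B\<^esub> b')) = f x0 \<otimes>\<^bsub>B\<^esub> (f x0 \<otimes>\<^bsub>B\<^esub> (b \<otimes>\<^bsub>B\<^esub> b'))"
      using fm[OF x0c Yc[OF bb]] Yprop[OF bb] by simp
    also have "\<dots> = (f x0 \<otimes>\<^bsub>B\<^esub> b) \<otimes>\<^bsub>B\<^esub> (f x0 \<otimes>\<^bsub>B\<^esub> b')"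
      using b fc[OF x0c] by (simp add: B.m_ac)
    also have "\<dots> = f (Y b \<otimes>\<^bsub>A\<^esub> Y b')"
      using fm[OF Yc[OF b(1)] Yc[OF b(2)]] Yprop b by simp
    finally show ?thesis using inj_onD[OF finj _ l r] by simp
  qed
  have Yadd: "Y (b \<oplus>\<^bsub>B\<^esub> b') = Y b \<oplus>\<^bsub>A\<^esub> Y b'" if b: "b \<in> carrier B" "b' \<in> carrier B" for b b'
  proof (rule Yuniq)
    show "b \<oplus>\<^bsub>B\<^esub> b' \<in> carrier B" using b by simp
    show "Y b \<oplus>\<^bsub>A\<^esub> Y b' \<in> I" using YI b by (simp add: I.a_closed)
    show "f (Y b \<oplus>\<^bsub>A\<^esub> Y b') = f x0 \<otimes>\<^bsub>B\<^esub> (b \<oplus>\<^bsub>B\<^esub> b')"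
      using fa[OF Yc[OF b(1)] Yc[OF b(2)]] Yprop b fc[OF x0c] by (simp add: B.r_distr)
  qed
  have Yone: "Y \<one>\<^bsub>B\<^esub> = x0"
    by (rule Yuniq) (use x0 fc[OF x0c] in simp_all)
  have Yf: "Y (f a) = x0 \<otimes>\<^bsub>A\<^esub> a" if a: "a \<in> carrier A" for a
  proof (rule Yuniq)
    show "f a \<in> carrier B" using a fc by blast
    show "x0 \<otimes>\<^bsub>A\<^esub> a \<in> I" using I.I_r_closed x0 a by blast
    show "f (x0 \<otimes>\<^bsub>A\<^esub> a) = f x0 \<otimes>\<^bsub>B\<^esub> f a" using fm x0c a by blast
  qed
  have gx0c: "g x0 \<in> carrier V" using gc x0c by blast
  have gYc: "\<And>b. b \<in> carrier B \<Longrightarrow> g (Y b) \<in> carrier V" using gc Yc by blast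
  have gYmul: "g x0 \<otimes>\<^bsub>V\<^esub> g (Y (b \<otimes>\<^bsub>B\<^esub> b')) = g (Y b) \<otimes>\<^bsub>V\<^esub> g (Y b')"
    if "b \<in> carrier B" "b' \<in> carrier B" for b b'
  proof -
    have "g (x0 \<otimes>\<^bsub>A\<^esub> Y (b \<otimes>\<^bsub>B\<^esub> b')) = g (Y b \<otimes>\<^bsub>A\<^esub> Y b')" using Ymul[OF that] by simp
    then show ?thesis using gm x0c Yc that by simp
  qed
  have K: "\<exists>c\<in>carrier V. g (Y b) = g x0 \<otimes>\<^bsub>V\<^esub> c" if b: "b \<in> carrier B" for b
  proof -
    from val[OF gx0c gYc[OF b]] show ?thesis
    proof
      assume "\<exists>c\<in>carrier V. g x0 = g (Y b) \<otimes>\<^bsub>V\<^esub> c"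
      then obtain c where c: "c \<in> carrier V" "g x0 = g (Y b) \<otimes>\<^bsub>V\<^esub> c" by blast
      show ?thesis
      proof (cases "\<exists>e\<in>carrier V. c \<otimes>\<^bsub>V\<^esub> e = \<one>\<^bsub>V\<^esub>")
        case True
        then obtain e where e: "e \<in> carrier V" "c \<otimes>\<^bsub>V\<^esub> e = \<one>\<^bsub>V\<^esub>" by blast
        have "g x0 \<otimes>\<^bsub>V\<^esub> e = g (Y b) \<otimes>\<^bsub>V\<^esub> (c \<otimes>\<^bsub>V\<^esub> e)"
          using c e gYc[OF b] by (simp add: V.m_assoc)
        then have "g (Y b) = g x0 \<otimes>\<^bsub>V\<^esub> e" using e gYc[OF b] by simp
        then show ?thesis using e by blast
      next
        case False
        have cnz: "c \<noteq> \<zero>\<^bsub>V\<^esub>" using c gx0 gYc[OF b] by auto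
        have ind: "g x0 = c [^]\<^bsub>V\<^esub> n \<otimes>\<^bsub>V\<^esub> g (Y (b [^]\<^bsub>B\<^esub> n))" for n :: nat
        proof (induct n)
          case 0
          then show ?case using Yone gx0c by simp
        next
          case (Suc n)
          have bn: "b [^]\<^bsub>B\<^esub> n \<in> carrier B" using b by simp
          have cn: "c [^]\<^bsub>V\<^esub> n \<in> carrier V" using c by simp
          have "g x0 \<otimes>\<^bsub>V\<^esub> (c [^]\<^bsub>V\<^esub> Suc n \<otimes>\<^bsub>V\<^esub> g (Y (b [^]\<^bsub>B\<^esub> Suc n)))
              = (c [^]\<^bsub>V\<^esub> n \<otimes>\<^bsub>V\<^esub> c) \<otimes>\<^bsub>V\<^esub> (g x0 \<otimes>\<^bsub>V\<^esub> g (Y (b [^]\<^bsub>B\<^esub> n \<otimes>\<^bsub>B\<^esub> b)))"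
            using c cn gx0c gYc bn b by (simp add: V.m_ac)
          also have "\<dots> = (c [^]\<^bsub>V\<^esub> n \<otimes>\<^bsub>V\<^esub> c) \<otimes>\<^bsub>V\<^esub> (g (Y (b [^]\<^bsub>B\<^esub> n)) \<otimes>\<^bsub>V\<^esub> g (Y b))"
            using gYmul[OF bn b] by simp
          also have "\<dots> = (c [^]\<^bsub>V\<^esub> n \<otimes>\<^bsub>V\<^esub> g (Y (b [^]\<^bsub>B\<^esub> n))) \<otimes>\<^bsub>V\<^esub> (g (Y b) \<otimes>\<^bsub>V\<^esub> c)"
            using c cn gYc bn b by (simp add: V.m_ac)
          also have "\<dots> = g x0 \<otimes>\<^bsub>V\<^esub> g x0" using Suc c(2) by simp
          finally have "g x0 \<otimes>\<^bsub>V\<^esub> (c [^]\<^bsub>V\<^esub> Suc n \<otimes>\<^bsub>V\<^esub> g (Y (b [^]\<^bsub>B\<^esub> Suc n))) = g x0 \<otimes>\<^bsub>V\<^esub> g x0" .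
          then show ?case using V.m_lcancel[OF gx0 gx0c, of "c [^]\<^bsub>V\<^esub> Suc n \<otimes>\<^bsub>V\<^esub> g (Y (b [^]\<^bsub>B\<^esub> Suc n))" "g x0"]
            c gx0c gYc b by simp
        qed
        have "g x0 = \<zero>\<^bsub>V\<^esub>"
        proof (rule val_rank_aux[OF VV c(1) cnz False gx0c])
          show "\<forall>n::nat. \<exists>d\<in>carrier V. g x0 = c [^]\<^bsub>V\<^esub> n \<otimes>\<^bsub>V\<^esub> d"
            using ind gYc b by (metis B.nat_pow_closed)
        qed
        then show ?thesis using gx0 by blast
      qed
    qed
  qed
  define H where "H b = (THE c. c \<in> carrier V \<and> g (Y b) = g x0 \<otimes>\<^bsub>V\<^esub> c)" for b
  have Hprop: "H b \<in> carrier V \<and> g (Y b) = g x0 \<otimes>\<^bsub>V\<^esub> H b" if b: "b \<in> carrier B" for b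
  proof -
    obtain c where c: "c \<in> carrier V" "g (Y b) = g x0 \<otimes>\<^bsub>V\<^esub> c" using K[OF b] by blast
    have "\<exists>!c. c \<in> carrier V \<and> g (Y b) = g x0 \<otimes>\<^bsub>V\<^esub> c"
    proof (rule ex1I[of _ c])
      show "c \<in> carrier V \<and> g (Y b) = g x0 \<otimes>\<^bsub>V\<^esub> c" using c by simp
      fix c' assume "c' \<in> carrier V \<and> g (Y b) = g x0 \<otimes>\<^bsub>V\<^esub> c'"
      then show "c' = c" using c V.m_lcancel[OF gx0 gx0c, of c' c] by simp
    qed
    then show ?thesis unfolding H_def by (rule theI')
  qed
  have Huniq: "H b = c" if "b \<in> carrier B" "c \<in> carrier V" "g (Y b) = g x0 \<otimes>\<^bsub>V\<^esub> c" for b c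
    using Hprop[OF that(1)] that V.m_lcancel[OF gx0 gx0c, of "H b" c] by simp
  have Hc: "\<And>b. b \<in> carrier B \<Longrightarrow> H b \<in> carrier V" using Hprop by blast
  have Hhom: "H \<in> ring_hom B V"
  proof (rule ring_hom_memI)
    fix b assume "b \<in> carrier B" then show "H b \<in> carrier V" by (rule Hc)
  next
    fix b b' assume b: "b \<in> carrier B" "b' \<in> carrier B"
    have bb: "b \<otimes>\<^bsub>B\<^esub> b' \<in> carrier B" using b by simp
    have "g x0 \<otimes>\<^bsub>V\<^esub> (g x0 \<otimes>\<^bsub>V\<^esub> H (b \<otimes>\<^bsub>B\<^esub> b')) = g x0 \<otimes>\<^bsub>V\<^esub> g (Y (b \<otimes>\<^bsub>B\<^esub> b'))"
      using Hprop[OF bb] by simp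
    also have "\<dots> = g (Y b) \<otimes>\<^bsub>V\<^esub> g (Y b')" by (rule gYmul[OF b])
    also have "\<dots> = (g x0 \<otimes>\<^bsub>V\<^esub> H b) \<otimes>\<^bsub>V\<^esub> (g x0 \<otimes>\<^bsub>V\<^esub> H b')" using Hprop b by simp
    also have "\<dots> = g x0 \<otimes>\<^bsub>V\<^esub> (g x0 \<otimes>\<^bsub>V\<^esub> (H b \<otimes>\<^bsub>V\<^esub> H b'))" using Hc b gx0c by (simp add: V.m_ac)
    finally have "g x0 \<otimes>\<^bsub>V\<^esub> H (b \<otimes>\<^bsub>B\<^esub> b') = g x0 \<otimes>\<^bsub>V\<^esub> (H b \<otimes>\<^bsub>V\<^esub> H b')"
      using V.m_lcancel[OF gx0 gx0c, of "g x0 \<otimes>\<^bsub>V\<^esub> H (b \<otimes>\<^bsub>B\<^esub> b')" "g x0 \<otimes>\<^bsub>V\<^esub> (H b \<otimes>\<^bsub>V\<^esub> H b')"]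
        Hc bb b gx0c by simp
    then have "g (Y (b \<otimes>\<^bsub>B\<^esub> b')) = g x0 \<otimes>\<^bsub>V\<^esub> (H b \<otimes>\<^bsub>V\<^esub> H b')" using Hprop[OF bb] by simp
    then show "H (b \<otimes>\<^bsub>B\<^esub> b') = H b \<otimes>\<^bsub>V\<^esub> H b'" using Huniq[OF bb] Hc b by simp
  next
    fix b b' assume b: "b \<in> carrier B" "b' \<in> carrier B"
    have bb: "b \<oplus>\<^bsub>B\<^esub> b' \<in> carrier B" using b by simp
    have "g (Y (b \<oplus>\<^bsub>B\<^esub> b')) = g (Y b) \<oplus>\<^bsub>V\<^esub> g (Y b')" using Yadd[OF b] ga Yc b by simp
    also have "\<dots> = g x0 \<otimes>\<^bsub>V\<^esub> (H b \<oplus>\<^bsub>V\<^esub> H b')" using Hprop b Hc gx0c by (simp add: V.r_distr)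
    finally show "H (b \<oplus>\<^bsub>B\<^esub> b') = H b \<oplus>\<^bsub>V\<^esub> H b'" using Huniq[OF bb] Hc b by simp
  next
    show "H \<one>\<^bsub>B\<^esub> = \<one>\<^bsub>V\<^esub>" using Huniq[of "\<one>\<^bsub>B\<^esub>" "\<one>\<^bsub>V\<^esub>"] Yone gx0c by simp
  qed
  have "\<forall>a\<in>carrier A. H (f a) = g a"
  proof
    fix a assume a: "a \<in> carrier A"
    show "H (f a) = g a" using Huniq[OF fc[OF a] gc[OF a]] Yf[OF a] gm[OF x0c a] by simp
  qed
  then show ?thesis using Hhom by blast
qed

lemma quot_lemma:
  fixes A :: "'a ring" and V :: "'v ring"
  assumes cA: "cring A" and iI: "ideal I A" and rV: "ring V" and gh: "g \<in> ring_hom A V"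
    and gI: "\<forall>x\<in>I. g x = \<zero>\<^bsub>V\<^esub>"
  shows "\<exists>h \<in> ring_hom (A Quot I) V. \<forall>a\<in>carrier A. h (a_r_coset A I a) = g a"
proof -
  define hq where "hq Z = g (SOME a. a \<in> carrier A \<and> Z = a_r_coset A I a)" for Z
  interpret A: cring A by (rule cA)
  interpret V: ring V by (rule rV)
  interpret I: ideal I A by (rule iI)
  have gc: "\<And>a. a \<in> carrier A \<Longrightarrow> g a \<in> carrier V" using gh by (rule ring_hom_closed)
  have ga: "\<And>a b. a \<in> carrier A \<Longrightarrow> b \<in> carrier A \<Longrightarrow> g (a \<oplus>\<^bsub>A\<^esub> b) = g a \<oplus>\<^bsub>V\<^esub> g b"
    using gh by (rule ring_hom_add)
  have gm: "\<And>a b. a \<in> carrier A \<Longrightarrow> b \<in> carrier A \<Longrightarrow> g (a \<otimes>\<^bsub>A\<^esub> b) = g a \<otimes>\<^bsub>V\<^esub> g b"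
    using gh by (rule ring_hom_mult)
  have hI: "hq (a_r_coset A I a) = g a" if a: "a \<in> carrier A" for a
  proof -
    define a' where "a' = (SOME a'. a' \<in> carrier A \<and> a_r_coset A I a = a_r_coset A I a')"
    have "a' \<in> carrier A \<and> a_r_coset A I a = a_r_coset A I a'"
      unfolding a'_def by (rule someI[of _ a]) (use a in simp)
    then have a': "a' \<in> carrier A" "a_r_coset A I a = a_r_coset A I a'" by auto
    have d: "a \<ominus>\<^bsub>A\<^esub> a' \<in> I" using A.quotient_eq_iff_same_a_r_cos[OF iI a a'(1)] a'(2) by simp
    have "a = (a \<ominus>\<^bsub>A\<^esub> a') \<oplus>\<^bsub>A\<^esub> a'" using a a'(1) by algebra
    then have "g a = g (a \<ominus>\<^bsub>A\<^esub> a') \<oplus>\<^bsub>V\<^esub> g a'" using ga a a'(1) by (metis A.minus_closed)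
    also have "\<dots> = g a'" using gI d gc a'(1) by simp
    finally show ?thesis unfolding hq_def a'_def[symmetric] by simp
  qed
  have carr: "\<exists>a\<in>carrier A. Z = a_r_coset A I a" if "Z \<in> carrier (A Quot I)" for Z
    using that unfolding FactRing_def A_RCOSETS_def' by auto
  have "hq \<in> ring_hom (A Quot I) V"
  proof (rule ring_hom_memI)
    fix Z assume "Z \<in> carrier (A Quot I)"
    then obtain a where "a \<in> carrier A" "Z = a_r_coset A I a" using carr by blast
    then show "hq Z \<in> carrier V" using hI gc by simp
  next
    fix Z W assume "Z \<in> carrier (A Quot I)" "W \<in> carrier (A Quot I)"
    then obtain a b where ab: "a \<in> carrier A" "Z = a_r_coset A I a" "b \<in> carrier A" "W = a_r_coset A I b"
      using carr by blast
    have "Z \<otimes>\<^bsub>A Quot I\<^esub> W = a_r_coset A I (a \<otimes>\<^bsub>A\<^esub> b)"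
      using ab I.rcoset_mult_add by (simp add: FactRing_def)
    then show "hq (Z \<otimes>\<^bsub>A Quot I\<^esub> W) = hq Z \<otimes>\<^bsub>V\<^esub> hq W" using ab hI gm by simp
  next
    fix Z W assume "Z \<in> carrier (A Quot I)" "W \<in> carrier (A Quot I)"
    then obtain a b where ab: "a \<in> carrier A" "Z = a_r_coset A I a" "b \<in> carrier A" "W = a_r_coset A I b"
      using carr by blast
    have "Z \<oplus>\<^bsub>A Quot I\<^esub> W = a_r_coset A I (a \<oplus>\<^bsub>A\<^esub> b)"
      using ab I.a_rcos_sum by (simp add: FactRing_def)
    then show "hq (Z \<oplus>\<^bsub>A Quot I\<^esub> W) = hq Z \<oplus>\<^bsub>V\<^esub> hq W" using ab hI ga by simp
  next
    show "hq \<one>\<^bsub>A Quot I\<^esub> = \<one>\<^bsub>V\<^esub>" using hI[of "\<one>\<^bsub>A\<^esub>"] gh by (simp add: FactRing_def ring_hom_one)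
  qed
  then show ?thesis using hI by blast
qed

lemma hom_fst:
  assumes "h \<in> ring_hom R S"
  shows "(\<lambda>p. h (fst p)) \<in> ring_hom (RDirProd R T) S"
  using assms by (auto simp add: ring_hom_def RDirProd_def DirProd_def monoid.defs)

lemma hom_snd:
  assumes "h \<in> ring_hom T S"
  shows "(\<lambda>p. h (snd p)) \<in> ring_hom (RDirProd R T) S"
  using assms by (auto simp add: ring_hom_def RDirProd_def DirProd_def monoid.defs)

lemma ff_id:
  fixes V :: "'v ring"
  assumes "ring V"
  shows "faithfully_flat_hom V V (\<lambda>x. x)"
proof -
  interpret V: ring V by fact
  have h: "(\<lambda>x. x) \<in> ring_hom V V" by (rule ring_hom_memI) auto
  have fl: "flat_hom V V (\<lambda>x. x)"
    unfolding flat_hom_def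
  proof (intro allI impI)
    fix n :: nat and a m
    assume H: "(\<forall>i<n. a i \<in> carrier V \<and> m i \<in> carrier V) \<and>
        finsum V (\<lambda>i. a i \<otimes>\<^bsub>V\<^esub> m i) {..<n} = \<zero>\<^bsub>V\<^esub>"
    have one: "{..<(1::nat)} = {0}" by auto
    have s1: "finsum V (\<lambda>j. m i \<otimes>\<^bsub>V\<^esub> \<one>\<^bsub>V\<^esub>) {..<(1::nat)} = m i" if "i < n" for i
      unfolding one using H that by (simp add: V.finsum_insert)
    have s2: "finsum V (\<lambda>i. a i \<otimes>\<^bsub>V\<^esub> m i) {..<n} = \<zero>\<^bsub>V\<^esub>" using H by simp
    show "\<exists>k::nat. \<exists>b y.
           (\<forall>i<n. \<forall>j<k. b i j \<in> carrier V) \<and> (\<forall>j<k. y j \<in> carrier V) \<and>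
           (\<forall>i<n. m i = finsum V (\<lambda>j. b i j \<otimes>\<^bsub>V\<^esub> y j) {..<k}) \<and>
           (\<forall>j<k. finsum V (\<lambda>i. a i \<otimes>\<^bsub>V\<^esub> b i j) {..<n} = \<zero>\<^bsub>V\<^esub>)"
      apply (rule exI[of _ 1], rule exI[of _ "\<lambda>i j. m i"], rule exI[of _ "\<lambda>j. \<one>\<^bsub>V\<^esub>"])
      using H s1 s2 by auto
  qed
  have mx: "genideal V ((\<lambda>x. x) ` M) \<noteq> carrier V" if "maximalideal M V" for M
  proof -
    have iM: "ideal M V" using that by (simp add: maximalideal_def)
    have "genideal V M \<subseteq> M" by (rule V.genideal_minimal[OF iM]) simp
    moreover have "M \<noteq> carrier V" using maximalideal.I_notcarr[OF that] by simp
    moreover have "M \<subseteq> carrier V" using iM by (simp add: ideal.Icarr subsetI)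
    ultimately show ?thesis by auto
  qed
  show ?thesis unfolding faithfully_flat_hom_def using h fl mx by blast
qed

theorem mainTheorem5:
  fixes A :: "'a ring" and B :: "'b ring" and f :: "'a \<Rightarrow> 'b"
    and I :: "'a set" and J :: "'b set"
  assumes exc: "excision_datum A B f I J"
  shows
    "(\<forall>(V::'v ring) g. valuation_ring_rank_le_one V \<and> g \<in> ring_hom A V \<longrightarrow>
        (\<exists>h \<in> ring_hom (A Quot I) V. \<forall>a\<in>carrier A. h (I +>\<^bsub>A\<^esub> a) = g a) \<or>
        (\<exists>h \<in> ring_hom B V. \<forall>a\<in>carrier A. h (f a) = g a))
   \<and> (\<forall>(V::'v ring) g. valuation_ring_rank_le_one V \<and> g \<in> ring_hom A V \<longrightarrow>
        (\<exists>(W::'v ring) \<phi> \<psi>. valuation_ring_rank_le_one W \<and> faithfully_flat_hom V W \<phi> \<and>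
           \<psi> \<in> ring_hom (RDirProd (A Quot I) B) W \<and>
           (\<forall>a\<in>carrier A. \<psi> (I +>\<^bsub>A\<^esub> a, f a) = \<phi> (g a))))"
proof -
  have cA: "cring A" and cB: "cring B" and fh: "f \<in> ring_hom A B" and iI: "ideal I A"
    and iJ: "ideal J B" and bij: "bij_betw f I J"
    using exc unfolding excision_datum_def by auto
  have P1: "(\<exists>h \<in> ring_hom (A Quot I) V. \<forall>a\<in>carrier A. h (I +>\<^bsub>A\<^esub> a) = g a) \<or>
        (\<exists>h \<in> ring_hom B V. \<forall>a\<in>carrier A. h (f a) = g a)"
    if VV: "valuation_ring_rank_le_one V" and gh: "g \<in> ring_hom A V" for V :: "'v ring" and g
  proof (cases "\<forall>x\<in>I. g x = \<zero>\<^bsub>V\<^esub>")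
    case True
    have "ring V" using VV unfolding valuation_ring_rank_le_one_def valuation_ring_def
      by (simp add: domain_def cring_def)
    then show ?thesis using quot_lemma[OF cA iI _ gh True] by blast
  next
    case False
    then obtain x0 where "x0 \<in> I" "g x0 \<noteq> \<zero>\<^bsub>V\<^esub>" by blast
    then show ?thesis using extend_lemma[OF cA cB fh iI iJ bij VV gh] by blast
  qed
  have P2: "\<exists>(W::'v ring) \<phi> \<psi>. valuation_ring_rank_le_one W \<and> faithfully_flat_hom V W \<phi> \<and>
           \<psi> \<in> ring_hom (RDirProd (A Quot I) B) W \<and>
           (\<forall>a\<in>carrier A. \<psi> (I +>\<^bsub>A\<^esub> a, f a) = \<phi> (g a))"
    if VV: "valuation_ring_rank_le_one V" and gh: "g \<in> ring_hom A V" for V :: "'v ring" and g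
  proof -
    have rV: "ring V" using VV unfolding valuation_ring_rank_le_one_def valuation_ring_def
      by (simp add: domain_def cring_def)
    have ff: "faithfully_flat_hom V V (\<lambda>x. x)" by (rule ff_id[OF rV])
    from P1[OF VV gh] show ?thesis
    proof
      assume "\<exists>h \<in> ring_hom (A Quot I) V. \<forall>a\<in>carrier A. h (I +>\<^bsub>A\<^esub> a) = g a"
      then obtain h where h: "h \<in> ring_hom (A Quot I) V" "\<forall>a\<in>carrier A. h (I +>\<^bsub>A\<^esub> a) = g a" by blast
      show ?thesis
        by (rule exI[of _ V], rule exI[of _ "\<lambda>x. x"], rule exI[of _ "\<lambda>p. h (fst p)"])
          (use VV ff hom_fst[OF h(1)] h(2) in auto)
    next
      assume "\<exists>h \<in> ring_hom B V. \<forall>a\<in>carrier A. h (f a) = g a"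
      then obtain h where h: "h \<in> ring_hom B V" "\<forall>a\<in>carrier A. h (f a) = g a" by blast
      show ?thesis
        by (rule exI[of _ V], rule exI[of _ "\<lambda>x. x"], rule exI[of _ "\<lambda>p. h (snd p)"])
          (use VV ff hom_snd[OF h(1)] h(2) in auto)
    qed
  qed
  show ?thesis using P1 P2 by blast
qed

end
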